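(* Let $(G=(V,E),k,\ell)$ be an instance of Almost Forest Deletion. Construct $(G'=(V',E'),R,k',\ell')$ as follows: start with $V'=V$, $E'=\varnothing$, $R=\varnothing$; for each edge $e=(u,v)\in E$ add a new vertex $v_e$ to $V'$ and to $R$ and add the edges $(u,v_e)$ and $(v_e,v)$ to $E'$ (i.e. subdivide $e$); set $k'=k$, $\ell'=\ell$. Then $(G',R,k',\ell')$ is an instance of Restricted Independent Almost Forest Deletion equivalent to $(G,k,\ell)$.
   Context: A graph is an $\ell$-forest if deleting at most $\ell$ of its edges yields a forest. Almost Forest Deletion: given a graph $G$ and integers $k,\ell\ge0$, decide whether there is $S\subseteq V(G)$ with $|S|\le k$ such that $G-S$ is an $\ell$-forest. Restricted Independent Almost Forest Deletion: given a graph $G$, a set $R\subseteq V(G)$ and integers $k,\ell\ge 0$, decide whether there is a set $S\subseteq V(G)\setminus R$ with $|S|\le k$ such that $S$ is an independent set in $G$ and $G-S$ is an $\ell$-forest. *)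

theory Defs
  imports Main
begin

definition simple_graph :: "'a set \<Rightarrow> 'a set set \<Rightarrow> bool" where
  "simple_graph V E \<longleftrightarrow> finite V \<and>
     (\<forall>e\<in>E. \<exists>u v. e = {u, v} \<and> u \<noteq> v \<and> u \<in> V \<and> v \<in> V)"

definition is_cycle :: "'a set \<Rightarrow> 'a set set \<Rightarrow> 'a list \<Rightarrow> bool" where
  "is_cycle V E xs \<longleftrightarrow> length xs \<ge> 3 \<and> distinct xs \<and> set xs \<subseteq> V \<and>
     (\<forall>i < length xs. {xs ! i, xs ! ((i + 1) mod length xs)} \<in> E)"

definition forest :: "'a set \<Rightarrow> 'a set set \<Rightarrow> bool" where
  "forest V E \<longleftrightarrow> \<not> (\<exists>xs. is_cycle V E xs)"

definition l_forest :: "nat \<Rightarrow> 'a set \<Rightarrow> 'a set set \<Rightarrow> bool" where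
  "l_forest l V E \<longleftrightarrow> (\<exists>F \<subseteq> E. card F \<le> l \<and> forest V (E - F))"

definition del_edges :: "'a set set \<Rightarrow> 'a set \<Rightarrow> 'a set set" where
  "del_edges E S = {e \<in> E. e \<inter> S = {}}"

definition independent :: "'a set set \<Rightarrow> 'a set \<Rightarrow> bool" where
  "independent E S \<longleftrightarrow> (\<forall>u\<in>S. \<forall>v\<in>S. {u, v} \<notin> E)"

definition almost_forest_deletion :: "'a set \<Rightarrow> 'a set set \<Rightarrow> nat \<Rightarrow> nat \<Rightarrow> bool" where
  "almost_forest_deletion V E k l \<longleftrightarrow>
     (\<exists>S \<subseteq> V. card S \<le> k \<and> l_forest l (V - S) (del_edges E S))"

definition restr_indep_afd :: "'a set \<Rightarrow> 'a set set \<Rightarrow> 'a set \<Rightarrow> nat \<Rightarrow> nat \<Rightarrow> bool" where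
  "restr_indep_afd V E R k l \<longleftrightarrow>
     (\<exists>S \<subseteq> V - R. card S \<le> k \<and> independent E S \<and> l_forest l (V - S) (del_edges E S))"

text \<open>The subdivision construction: original vertices are tagged Inl, the new vertex v_e is Inr e.\<close>
definition subdiv_V :: "'a set \<Rightarrow> 'a set set \<Rightarrow> ('a + 'a set) set" where
  "subdiv_V V E = Inl ` V \<union> Inr ` E"

definition subdiv_E :: "'a set set \<Rightarrow> ('a + 'a set) set set" where
  "subdiv_E E = {{Inl u, Inr e} | u e. e \<in> E \<and> u \<in> e}"

definition subdiv_R :: "'a set set \<Rightarrow> ('a + 'a set) set" where
  "subdiv_R E = Inr ` E"

end

theory Submission
  imports Defs
begin

lemma subdiv_edge:
  assumes "{x,y} \<in> subdiv_E E"
  shows "(\<exists>u e. x = Inl u \<and> y = Inr e \<and> e\<in>E \<and> u\<in>e) \<or> (\<exists>u e. y = Inl u \<and> x = Inr e \<and> e\<in>E \<and> u\<in>e)"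
proof -
  obtain u e where "{x,y} = {Inl u, Inr e}" "e \<in> E" "u \<in> e" using assms unfolding subdiv_E_def by blast
  then show ?thesis unfolding doubleton_eq_iff by blast
qed
lemma two_edges_eq:
  assumes "i < m" "j < m" "m \<ge> 3" "distinct xs" "length xs = m"
    "{xs!i, xs!((i+1) mod m)} = {xs!j, xs!((j+1) mod m)}"
  shows "i = j"
proof -
  have im: "(i+1) mod m < m" "(j+1) mod m < m" using assms by auto
  from assms(6) consider "xs!i = xs!j" | "xs!i = xs!((j+1) mod m)" "xs!((i+1) mod m) = xs!j"
    unfolding doubleton_eq_iff by blast
  then show ?thesis
  proof cases
    case 1 then show ?thesis using assms by (simp add: nth_eq_iff_index_eq)
  next
    case 2
    have a: "i = (j+1) mod m" using 2 assms im by (simp add: nth_eq_iff_index_eq)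
    have b: "(i+1) mod m = j" using 2 assms im by (simp add: nth_eq_iff_index_eq)
    show ?thesis
    proof (cases "j+1 < m")
      case True
      then have "i = j+1" using a by simp
      show ?thesis
      proof (cases "i+1 < m")
        case True then show ?thesis using b \<open>i = j+1\<close> by simp
      next
        case False
        then have "i+1 = m" using assms(1) by simp
        then show ?thesis using b \<open>i = j+1\<close> assms(3) by simp
      qed
    next
      case False
      then have "j+1 = m" using assms by simp
      then have "i = 0" using a by simp
      then show ?thesis using b assms \<open>j+1 = m\<close> by simp
    qed
  qed
qed


lemma cycle_up:
  fixes xs :: "'a list"
  assumes cyc: "is_cycle V1 E1 xs"
    and hE: "\<And>e u. e \<in> E1 \<Longrightarrow> u \<in> e \<Longrightarrow> {Inl u, Inr e} \<in> E2"
    and hV: "\<And>a. a \<in> V1 \<Longrightarrow> Inl a \<in> V2"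
    and hR: "\<And>e. e \<in> E1 \<Longrightarrow> Inr e \<in> V2"
  shows "\<exists>ys. is_cycle V2 E2 (ys :: ('a + 'a set) list)"
proof -
  define m where "m = length xs"
  have m3: "m \<ge> 3" and dx: "distinct xs" and sx: "set xs \<subseteq> V1"
    and ex: "\<And>i. i < m \<Longrightarrow> {xs!i, xs!((i+1) mod m)} \<in> E1"
    using cyc unfolding is_cycle_def m_def by auto
  define ed where "ed i = {xs!i, xs!((i+1) mod m)}" for i
  define g where "g k = (if even k then Inl (xs!(k div 2)) else Inr (ed (k div 2)))" for k
  define ys where "ys = map g [0..<2*m]"
  have ly: "length ys = 2*m" unfolding ys_def by simp
  have ysn: "\<And>k. k < 2*m \<Longrightarrow> ys!k = g k" unfolding ys_def by simp
  have "distinct ys"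
    unfolding distinct_conv_nth ly
  proof (intro allI impI)
    fix i j assume ij: "i < 2*m" "j < 2*m" "i \<noteq> j"
    show "ys!i \<noteq> ys!j"
    proof
      assume eq: "ys!i = ys!j"
      then have geq: "g i = g j" using ij ysn by simp
      have di: "i div 2 < m" "j div 2 < m" using ij by auto
      show False
      proof (cases "even i")
        case True
        show False
        proof (cases "even j")
          case True
          with \<open>even i\<close> geq have "xs!(i div 2) = xs!(j div 2)" unfolding g_def by simp
          then have "i div 2 = j div 2" using di dx m_def nth_eq_iff_index_eq by metis
          then show False using \<open>even i\<close> \<open>even j\<close> ij(3)
            by presburger
        next
          case False then show False using \<open>even i\<close> geq unfolding g_def by simp
        qed
      next
        case False
        show False
        proof (cases "even j")
          case True then show False using \<open>odd i\<close> geq unfolding g_def by simp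
        next
          case False
          with \<open>odd i\<close> geq have "ed (i div 2) = ed (j div 2)" unfolding g_def by simp
          then have "i div 2 = j div 2" using two_edges_eq[OF di m3 dx m_def[symmetric]]
            unfolding ed_def by blast
          then show False using \<open>odd i\<close> \<open>odd j\<close> ij(3)
            by presburger
        qed
      qed
    qed
  qed
  moreover have "set ys \<subseteq> V2"
  proof
    fix y assume "y \<in> set ys"
    then obtain k where k: "k < 2*m" "y = g k" unfolding ys_def by auto
    have "k div 2 < m" using k by auto
    then show "y \<in> V2"
      using k hV hR ex sx m_def unfolding g_def ed_def by (auto simp: subset_iff)
  qed
  moreover have "\<forall>k < length ys. {ys!k, ys!((k+1) mod length ys)} \<in> E2"
  proof (intro allI impI)
    fix k assume "k < length ys"
    then have k: "k < 2*m" using ly by simp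
    define i where "i = k div 2"
    have i: "i < m" using k i_def by auto
    show "{ys!k, ys!((k+1) mod length ys)} \<in> E2"
    proof (cases "even k")
      case True
      then have "k+1 < 2*m" using k by presburger
      then have "ys!((k+1) mod length ys) = g (k+1)" using ysn ly by simp
      moreover have "g (k+1) = Inr (ed i)" unfolding g_def i_def using True by simp
      moreover have "ys!k = Inl (xs!i)" using ysn k True unfolding g_def i_def by simp
      ultimately show ?thesis using hE[OF ex[OF i]] unfolding ed_def by simp
    next
      case False
      have ki: "k = 2*i+1" using False i_def by presburger
      have "(k+1) mod (2*m) = 2*((i+1) mod m)"
      proof (cases "i+1 < m")
        case True then show ?thesis using ki by simp
      next
        case False then have "i+1 = m" using i by simp
        then have "k+1 = 2*m" using ki by simp
        then show ?thesis using \<open>i+1 = m\<close> by simp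
      qed
      moreover have "2*((i+1) mod m) < 2*m" using m3 by simp
      ultimately have "ys!((k+1) mod length ys) = Inl (xs!((i+1) mod m))"
        using ysn ly unfolding g_def by simp
      moreover have "ys!k = Inr (ed i)" using ysn k False unfolding g_def i_def by simp
      ultimately show ?thesis using hE[OF ex[OF i], of "xs!((i+1) mod m)"] unfolding ed_def
        by (simp add: insert_commute)
    qed
  qed
  ultimately have "is_cycle V2 E2 ys" unfolding is_cycle_def using ly m3 by simp
  then show ?thesis by blast
qed



lemma mid_arith:
  fixes j m c n :: nat
  assumes "j < m" "c \<le> 1" "n = 2*m"
  shows "((2*j+c+1) mod n + 1) mod n = 2*((j+1) mod m)+c"
proof (cases "j+1 < m")
  case True
  then have "2*j+c+1 < n" "2*j+c+2 < n" using assms by auto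
  then show ?thesis using True by simp
next
  case False
  then have jm: "j+1 = m" using assms by simp
  show ?thesis
  proof (cases "c = 0")
    case True
    then have "2*j+c+1 = n - 1" "n \<ge> 1" using jm assms by auto
    then show ?thesis using True jm assms by simp
  next
    case False
    then have "c = 1" using assms by simp
    then have "2*j+c+1 = n" "n \<ge> 2" using jm assms by auto
    then show ?thesis using \<open>c = 1\<close> jm by simp
  qed
qed

lemma cycle_down:
  fixes ys :: "('a + 'a set) list"
  assumes sg: "\<And>e a b. e \<in> E \<Longrightarrow> a \<in> e \<Longrightarrow> b \<in> e \<Longrightarrow> a \<noteq> b \<Longrightarrow> e = {a,b}"
    and cyc: "is_cycle V2 E2 ys" and sub: "E2 \<subseteq> subdiv_E E"
    and hV: "\<And>a. Inl a \<in> V2 \<Longrightarrow> a \<in> V1"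
    and hE: "\<And>a b e. {Inl a, Inr e} \<in> E2 \<Longrightarrow> {Inl b, Inr e} \<in> E2 \<Longrightarrow> a \<noteq> b \<Longrightarrow> {a,b} \<in> E1"
  shows "\<exists>xs. is_cycle V1 E1 (xs :: 'a list)"
proof -
  define n where "n = length ys"
  have n3: "n \<ge> 3" and dy: "distinct ys" and sy: "set ys \<subseteq> V2"
    and ey: "\<And>i. i < n \<Longrightarrow> {ys!i, ys!((i+1) mod n)} \<in> E2"
    using cyc unfolding is_cycle_def n_def by auto
  have nxt: "isl (ys!i) \<noteq> isl (ys!((i+1) mod n))" if "i < n" for i
  proof -
    have "{ys!i, ys!((i+1) mod n)} \<in> subdiv_E E" using ey[OF that] sub by auto
    from subdiv_edge[OF this] show ?thesis by auto
  qed
  have par: "i < n \<Longrightarrow> isl (ys!i) = (isl (ys!0) = even i)" for i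
  proof (induction i)
    case 0 then show ?case by simp
  next
    case (Suc i)
    then have "i < n" by simp
    moreover have "(i+1) mod n = Suc i" using Suc.prems by simp
    ultimately show ?case using nxt[of i] Suc by auto
  qed
  have "isl (ys!(n-1)) \<noteq> isl (ys!0)"
    using nxt[of "n-1"] n3 by simp
  then have "odd (n-1)" using par[of "n-1"] n3 by auto
  then have evn: "even n" using n3 by presburger
  define m where "m = n div 2"
  have nm: "n = 2*m" using evn m_def by simp
  have m2: "m \<ge> 2" using nm n3 by simp
  define c :: nat where "c = (if isl (ys!0) then 0 else 1)"
  have c1: "c \<le> 1" unfolding c_def by simp
  have idx: "2*j+c < n" if "j < m" for j using that nm c1 by simp
  have islj: "isl (ys!(2*j+c))" if "j < m" for j
    using par[OF idx[OF that]] unfolding c_def by auto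
  define xs where "xs = map (\<lambda>j. projl (ys!(2*j+c))) [0..<m]"
  have lx: "length xs = m" unfolding xs_def by simp
  have xsn: "ys!(2*j+c) = Inl (xs!j)" if "j < m" for j
    using islj[OF that] that unfolding xs_def by (cases "ys!(2*j+c)") auto
  have dx: "distinct xs"
    unfolding distinct_conv_nth lx
  proof (intro allI impI)
    fix i j assume ij: "i < m" "j < m" "i \<noteq> j"
    show "xs!i \<noteq> xs!j"
    proof
      assume "xs!i = xs!j"
      then have "ys!(2*i+c) = ys!(2*j+c)" using xsn ij by simp
      then have "2*i+c = 2*j+c" using dy idx ij n_def nth_eq_iff_index_eq by metis
      then show False using ij by simp
    qed
  qed
  have key: "\<exists>e. e \<in> E \<and> xs!j \<in> e \<and> xs!((j+1) mod m) \<in> e \<and>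
      ys!((2*j+c+1) mod n) = Inr e \<and> {xs!j, xs!((j+1) mod m)} \<in> E1" if j: "j < m" for j
  proof -
    define mid where "mid = (2*j+c+1) mod n"
    define j' where "j' = (j+1) mod m"
    have j': "j' < m" using j'_def m2 by simp
    have midn: "mid < n" using mid_def n3 by simp
    have e1: "{ys!(2*j+c), ys!mid} \<in> E2" using ey[OF idx[OF j]] mid_def by simp
    have e2: "{ys!mid, ys!(2*j'+c)} \<in> E2"
      using ey[OF midn] mid_arith[OF j c1 nm] unfolding mid_def j'_def by simp
    obtain e where me: "ys!mid = Inr e" "e \<in> E" "xs!j \<in> e"
      using subdiv_edge[of "ys!(2*j+c)" "ys!mid" E] e1 sub xsn[OF j] by auto
    have b: "xs!j' \<in> e"
      using subdiv_edge[of "ys!mid" "ys!(2*j'+c)" E] e2 sub xsn[OF j'] me by auto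
    have "j \<noteq> j'"
    proof (cases "j+1 < m")
      case True then show ?thesis unfolding j'_def by simp
    next
      case False
      then have "j+1 = m" using j by simp
      then show ?thesis unfolding j'_def using m2 by simp
    qed
    then have ab: "xs!j \<noteq> xs!j'" using dx j j' lx nth_eq_iff_index_eq by metis
    have "{Inl (xs!j), Inr e} \<in> E2" using e1 xsn[OF j] me by simp
    moreover have "{Inl (xs!j'), Inr e} \<in> E2" using e2 xsn[OF j'] me by (simp add: insert_commute)
    ultimately have "{xs!j, xs!j'} \<in> E1" using hE ab by blast
    then show ?thesis using me b unfolding mid_def j'_def by blast
  qed
  have m3: "m \<ge> 3"
  proof (rule ccontr)
    assume "\<not> m \<ge> 3"
    then have m2': "m = 2" using m2 by simp
    obtain e0 where e0: "e0 \<in> E" "xs!0 \<in> e0" "xs!1 \<in> e0" "ys!((c+1) mod n) = Inr e0"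
      using key[of 0] m2' by auto
    obtain e1 where e1: "e1 \<in> E" "xs!1 \<in> e1" "xs!0 \<in> e1" "ys!(Suc (Suc (Suc c)) mod n) = Inr e1"
      using key[of 1] m2' by (auto simp: add.commute)
    have "xs!0 \<noteq> xs!1" using dx lx m2' nth_eq_iff_index_eq by fastforce
    then have "e0 = e1" using sg e0 e1 by metis
    then have "ys!((c+1) mod n) = ys!(Suc (Suc (Suc c)) mod n)" using e0 e1 by simp
    moreover have "(c+1) mod n < n" "Suc (Suc (Suc c)) mod n < n" using n3 by auto
    ultimately have "(c+1) mod n = Suc (Suc (Suc c)) mod n" using dy n_def nth_eq_iff_index_eq by metis
    moreover have "c = 0 \<or> c = 1" using c1 by auto
    ultimately show False using nm m2' by auto
  qed
  have "set xs \<subseteq> V1"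
  proof
    fix x assume "x \<in> set xs"
    then obtain j where j: "j < m" "x = xs!j" using lx by (auto simp: in_set_conv_nth)
    have "ys!(2*j+c) \<in> V2" using sy idx[OF j(1)] n_def by auto
    then show "x \<in> V1" using hV xsn[OF j(1)] j by simp
  qed
  moreover have "\<forall>j < length xs. {xs!j, xs!((j+1) mod length xs)} \<in> E1"
    using key lx by blast
  ultimately have "is_cycle V1 E1 xs" unfolding is_cycle_def using lx m3 dx by simp
  then show ?thesis by blast
qed


lemma sg_facts:
  assumes "simple_graph V E"
  shows "finite V" "finite E" "\<And>e. e \<in> E \<Longrightarrow> e \<subseteq> V"
    "\<And>e a b. e \<in> E \<Longrightarrow> a \<in> e \<Longrightarrow> b \<in> e \<Longrightarrow> a \<noteq> b \<Longrightarrow> e = {a,b}"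
    "\<And>e. e \<in> E \<Longrightarrow> \<exists>u. u \<in> e"
proof -
  have ed: "\<exists>u v. e = {u, v} \<and> u \<noteq> v \<and> u \<in> V \<and> v \<in> V" if "e \<in> E" for e
    using assms that unfolding simple_graph_def by simp
  show fV: "finite V" using assms unfolding simple_graph_def by simp
  show sub: "e \<subseteq> V" if "e \<in> E" for e
    using ed[OF that] by auto
  then have "E \<subseteq> Pow V" by blast
  then show "finite E" using fV finite_subset by blast
  show "e = {a,b}" if h: "e \<in> E" "a \<in> e" "b \<in> e" "a \<noteq> b" for e a b
  proof -
    obtain u v where "e = {u,v}" using ed[OF h(1)] by blast
    then show ?thesis using h(2-4) by auto
  qed
  show "\<exists>u. u \<in> e" if "e \<in> E" for e
    using ed[OF that] by auto
qed

lemma finite_subdiv_E: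
  assumes "finite V" "finite E" "\<And>e. e \<in> E \<Longrightarrow> e \<subseteq> V"
  shows "finite (subdiv_E E)"
proof -
  have "subdiv_E E \<subseteq> (\<lambda>(u,e). {Inl u, Inr e}) ` (V \<times> E)"
  proof
    fix x assume "x \<in> subdiv_E E"
    then obtain u e where x: "x = {Inl u, Inr e}" "e \<in> E" "u \<in> e" unfolding subdiv_E_def by blast
    then have "(u,e) \<in> V \<times> E" using assms(3) by blast
    then show "x \<in> (\<lambda>(u,e). {Inl u, Inr e}) ` (V \<times> E)" using x(1) by force
  qed
  moreover have "finite (V \<times> E)" using assms by simp
  ultimately show ?thesis using finite_subset by blast
qed

theorem lemma12:
  fixes V :: "'a set" and E :: "'a set set" and k l :: nat
  assumes "simple_graph V E"
  shows "simple_graph (subdiv_V V E) (subdiv_E E) \<and> subdiv_R E \<subseteq> subdiv_V V E \<and>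
    (almost_forest_deletion V E k l \<longleftrightarrow>
     restr_indep_afd (subdiv_V V E) (subdiv_E E) (subdiv_R E) k l)"
proof -
  note sf = sg_facts[OF assms]
  have fE': "finite (subdiv_E E)" using finite_subdiv_E sf by blast
  have sg': "simple_graph (subdiv_V V E) (subdiv_E E)"
    unfolding simple_graph_def
  proof (intro conjI ballI)
    show "finite (subdiv_V V E)" unfolding subdiv_V_def using sf by simp
    fix f assume "f \<in> subdiv_E E"
    then obtain u e where "f = {Inl u, Inr e}" "e \<in> E" "u \<in> e" unfolding subdiv_E_def by blast
    then show "\<exists>u v. f = {u, v} \<and> u \<noteq> v \<and> u \<in> subdiv_V V E \<and> v \<in> subdiv_V V E"
      unfolding subdiv_V_def using sf(3) by blast
  qed
  have R: "subdiv_R E \<subseteq> subdiv_V V E" unfolding subdiv_R_def subdiv_V_def by blast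
  have fwd: "restr_indep_afd (subdiv_V V E) (subdiv_E E) (subdiv_R E) k l"
    if "almost_forest_deletion V E k l"
  proof -
    have "\<exists>S \<subseteq> V. card S \<le> k \<and> l_forest l (V - S) (del_edges E S)"
      using that by (simp only: almost_forest_deletion_def)
    then obtain S where S: "S \<subseteq> V" "card S \<le> k" and lf: "l_forest l (V - S) (del_edges E S)"
      by blast
    have "\<exists>F \<subseteq> del_edges E S. card F \<le> l \<and> forest (V - S) (del_edges E S - F)"
      using lf by (simp only: l_forest_def)
    then obtain F where F: "F \<subseteq> del_edges E S" "card F \<le> l"
      and fo: "forest (V - S) (del_edges E S - F)"
      by blast
    define S' :: "('a + 'a set) set" where "S' = Inl ` S"
    define pick where "pick f = (SOME u. u \<in> f)" for f :: "'a set"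
    have pick: "pick f \<in> f" if "f \<in> E" for f
      using sf(5)[OF that] unfolding pick_def by (metis someI_ex)
    define F' :: "('a + 'a set) set set" where "F' = (\<lambda>f. {Inl (pick f), Inr f}) ` F"
    have S'sub: "S' \<subseteq> subdiv_V V E - subdiv_R E"
      using S unfolding S'_def subdiv_V_def subdiv_R_def by blast
    have cS': "card S' \<le> k" unfolding S'_def using S card_image_le[of S Inl]
      by (metis card_image inj_Inl inj_on_subset subset_UNIV)
    have ind: "independent (subdiv_E E) S'"
      unfolding independent_def S'_def subdiv_E_def doubleton_eq_iff by blast
    have FE: "F \<subseteq> E" using F unfolding del_edges_def by blast
    have fF: "finite F" using FE sf(2) finite_subset by blast
    have F'sub: "F' \<subseteq> del_edges (subdiv_E E) S'"
    proof
      fix g assume "g \<in> F'"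
      then obtain f where f: "f \<in> F" "g = {Inl (pick f), Inr f}" unfolding F'_def by blast
      have fE: "f \<in> E" and fS: "f \<inter> S = {}" using f F unfolding del_edges_def by auto
      have "g \<in> subdiv_E E" unfolding subdiv_E_def using f pick[OF fE] fE by blast
      moreover have "g \<inter> S' = {}" using f pick[OF fE] fS unfolding S'_def by auto
      ultimately show "g \<in> del_edges (subdiv_E E) S'" unfolding del_edges_def by blast
    qed
    have cF': "card F' \<le> l" unfolding F'_def using card_image_le[OF fF] F by (meson le_trans)
    have fo': "forest (subdiv_V V E - S') (del_edges (subdiv_E E) S' - F')"
      unfolding forest_def
    proof
      assume "\<exists>ys. is_cycle (subdiv_V V E - S') (del_edges (subdiv_E E) S' - F') ys"
      then obtain ys where ys: "is_cycle (subdiv_V V E - S') (del_edges (subdiv_E E) S' - F') ys"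
        by blast
      have "\<exists>xs. is_cycle (V - S) (del_edges E S - F) xs"
      proof (rule cycle_down[OF sf(4) ys])
        show "del_edges (subdiv_E E) S' - F' \<subseteq> subdiv_E E" unfolding del_edges_def by blast
        show "a \<in> V - S" if "Inl a \<in> subdiv_V V E - S'" for a
          using that unfolding subdiv_V_def S'_def by auto
        show "{a, b} \<in> del_edges E S - F"
          if h1: "{Inl a, Inr e} \<in> del_edges (subdiv_E E) S' - F'"
            and h2: "{Inl b, Inr e} \<in> del_edges (subdiv_E E) S' - F'" and ab: "a \<noteq> b" for a b e
        proof -
          have "{Inl a, Inr e} \<in> subdiv_E E" using h1 unfolding del_edges_def by blast
          then have eE: "e \<in> E" and ae: "a \<in> e" using subdiv_edge by fastforce+
          have "{Inl b, Inr e} \<in> subdiv_E E" using h2 unfolding del_edges_def by blast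
          then have be: "b \<in> e" using subdiv_edge by fastforce
          have eab: "e = {a,b}" using sf(4)[OF eE ae be ab] .
          have "a \<notin> S" "b \<notin> S" using h1 h2 unfolding del_edges_def S'_def by auto
          then have "e \<in> del_edges E S" using eE eab unfolding del_edges_def by auto
          moreover have "e \<notin> F"
          proof
            assume "e \<in> F"
            then have "{Inl (pick e), Inr e} \<in> F'" unfolding F'_def by blast
            moreover have "pick e = a \<or> pick e = b" using pick[OF eE] eab by auto
            ultimately show False using h1 h2 by auto
          qed
          ultimately show ?thesis using eab by simp
        qed
      qed
      then show False using fo unfolding forest_def by blast
    qed
    have "l_forest l (subdiv_V V E - S') (del_edges (subdiv_E E) S')"
      unfolding l_forest_def by (rule exI[of _ F']) (use F'sub cF' fo' in simp)
    then show ?thesis unfolding restr_indep_afd_def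
      by (intro exI[of _ S']) (use S'sub cS' ind in simp)
  qed
  have bwd: "almost_forest_deletion V E k l"
    if "restr_indep_afd (subdiv_V V E) (subdiv_E E) (subdiv_R E) k l"
  proof -
    have "\<exists>S' \<subseteq> subdiv_V V E - subdiv_R E. card S' \<le> k \<and> independent (subdiv_E E) S' \<and>
        l_forest l (subdiv_V V E - S') (del_edges (subdiv_E E) S')"
      using that by (simp only: restr_indep_afd_def)
    then obtain S' where S': "S' \<subseteq> subdiv_V V E - subdiv_R E" "card S' \<le> k"
      and lf: "l_forest l (subdiv_V V E - S') (del_edges (subdiv_E E) S')"
      by blast
    have "\<exists>F' \<subseteq> del_edges (subdiv_E E) S'. card F' \<le> l \<and>
        forest (subdiv_V V E - S') (del_edges (subdiv_E E) S' - F')"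
      using lf by (simp only: l_forest_def)
    then obtain F' where F': "F' \<subseteq> del_edges (subdiv_E E) S'" "card F' \<le> l"
      and fo: "forest (subdiv_V V E - S') (del_edges (subdiv_E E) S' - F')"
      by blast
    define S :: "'a set" where "S = Inl -` S'"
    have SS': "S' = Inl ` S" using S'(1) unfolding S_def subdiv_V_def subdiv_R_def by auto
    have SV: "S \<subseteq> V" using S'(1) unfolding S_def subdiv_V_def subdiv_R_def by auto
    have cS: "card S \<le> k" using S'(2) SS' by (simp add: card_image)
    define F where "F = {e \<in> del_edges E S. \<exists>f\<in>F'. Inr e \<in> f}"
    define h where "h f = (SOME e. Inr e \<in> f)" for f :: "('a + 'a set) set"
    have "F' \<subseteq> subdiv_E E" using F'(1) unfolding del_edges_def by blast
    then have fF': "finite F'" using fE' by (rule finite_subset)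
    have "F \<subseteq> h ` F'"
    proof
      fix e assume "e \<in> F"
      then obtain f where f: "f \<in> F'" "Inr e \<in> f" unfolding F_def by blast
      then have "f \<in> subdiv_E E" using F'(1) unfolding del_edges_def by blast
      then obtain u e0 where "f = {Inl u, Inr e0}" unfolding subdiv_E_def by blast
      then have "\<And>x. Inr x \<in> f \<Longrightarrow> x = e" using f by auto
      then have "h f = e" unfolding h_def using f(2) by (metis someI_ex)
      then show "e \<in> h ` F'" using f by blast
    qed
    then have cF: "card F \<le> l"
      using card_mono[OF finite_imageI[OF fF'] \<open>F \<subseteq> h ` F'\<close>] card_image_le[OF fF', of h] F'(2)
      by linarith
    have Fsub: "F \<subseteq> del_edges E S" unfolding F_def by blast
    have foG: "forest (V - S) (del_edges E S - F)"
      unfolding forest_def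
    proof
      assume "\<exists>xs. is_cycle (V - S) (del_edges E S - F) xs"
      then obtain xs where xs: "is_cycle (V - S) (del_edges E S - F) xs" by blast
      have "\<exists>ys. is_cycle (subdiv_V V E - S') (del_edges (subdiv_E E) S' - F') ys"
      proof (rule cycle_up[OF xs])
        show "{Inl u, Inr e} \<in> del_edges (subdiv_E E) S' - F'"
          if e: "e \<in> del_edges E S - F" and u: "u \<in> e" for e u
        proof -
          have eE: "e \<in> E" and eS: "e \<inter> S = {}" using e unfolding del_edges_def by auto
          have "{Inl u, Inr e} \<in> subdiv_E E" unfolding subdiv_E_def using eE u by blast
          moreover have "{Inl u, Inr e} \<inter> S' = {}" using SS' eS u by auto
          moreover have "{Inl u, Inr e} \<notin> F'" using e unfolding F_def by blast
          ultimately show ?thesis unfolding del_edges_def by blast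
        qed
        show "Inl a \<in> subdiv_V V E - S'" if "a \<in> V - S" for a
          using that SS' unfolding subdiv_V_def by auto
        show "Inr e \<in> subdiv_V V E - S'" if "e \<in> del_edges E S - F" for e
          using that SS' unfolding subdiv_V_def del_edges_def by auto
      qed
      then show False using fo unfolding forest_def by blast
    qed
    have "l_forest l (V - S) (del_edges E S)"
      unfolding l_forest_def by (rule exI[of _ F]) (use Fsub cF foG in simp)
    then show ?thesis unfolding almost_forest_deletion_def
      by (intro exI[of _ S]) (use SV cS in simp)
  qed
  show ?thesis using sg' R fwd bwd by blast
qed

end
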